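(* Let $\Omega$ be a set, $G=S_\Omega$, $H\subseteq G$ any set of permutations, and $\mathcal Q$ a second-order structure on $\Omega$. (1) A first-order or second-order relation $Q$ on $\Omega$ (of finite type) belongs to $\mathrm{Inv}(\mathrm{Aut}(\mathcal Q))$ if and only if $Q$ is definable in $\mathscr L_{\infty\infty}(\mathcal Q)$. (2) $\mathrm{Aut}(\mathrm{Inv}(H))$ is the smallest subgroup of $G$ including $H$.
   Context: A (finite) second-order relation of type $(i_1,\dots,i_k)$ on $\Omega$ is a subset of $\mathcal P(\Omega^{i_1})\times\cdots\times\mathcal P(\Omega^{i_k})$ with $k,i_1,\dots,i_k$ finite; a first-order relation is a subset of $\Omega^n$, $n$ finite. A second-order structure on $\Omega$ is a set of first-order and second-order relations of this kind. A permutation $g$ preserves a first-order relation $R$ if $gR=R$, and preserves a second-order relation $Q$ of type $(i_1,\dots,i_k)$ if for all $R_j\subseteq\Omega^{i_j}$: $(R_1,\dots,R_k)\in Q$ iff $(gR_1,\dots,gR_k)\in Q$. $\mathrm{Aut}(\mathcal Q)$ is the set of permutations of $\Omega$ preserving every member of $\mathcal Q$; $\mathrm{Inv}(H)$ is the set of all (finite-type) first-order and second-order relations on $\Omega$ preserved by every $h\in H$. $\mathscr L_{\infty\infty}(\mathcal Q)$ is the infinitary logic with equality (arbitrary conjunctions and disjunctions, quantification over arbitrary sequences of variables) with a predicate symbol for each first-order relation of $\mathcal Q$ and a generalized quantifier symbol for each second-order relation of $\mathcal Q$, interpreted on $\Omega$ in the standard Lindström way: for $Q$ of type $(i_1,\dots,i_k)$,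 $\bar Q\,\bar x_1\dots\bar x_k(\phi_1,\dots,\phi_k)$ holds under an assignment iff $(\|\phi_1\|,\dots,\|\phi_k\|)\in Q$, where $\|\phi_j\|$ is the set of $i_j$-tuples satisfying $\phi_j$ in the variables $\bar x_j$. A first-order relation $R\subseteq\Omega^n$ is definable in $\mathscr L_{\infty\infty}(\mathcal Q)$ if some formula $\phi(x_1,\dots,x_n)$ (without parameters) defines it in $(\Omega,\mathcal Q)$. A second-order relation $Q$ of type $(i_1,\dots,i_k)$ is definable in $\mathscr L_{\infty\infty}(\mathcal Q)$ if there is a sentence $\phi(\bar R_1,\dots,\bar R_k)$ of $\mathscr L_{\infty\infty}(\mathcal Q)$ expanded by new predicate symbols $\bar R_j$ of arity $i_j$ such that for all $R_j\subseteq\Omega^{i_j}$: $(\Omega,\mathcal Q,R_1,\dots,R_k)\models\phi$ iff $(R_1,\dots,R_k)\in Q$. *)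

theory Defs
  imports Main "HOL-Algebra.Bij"
begin

text \<open>An n-tuple is a list of length n.  A first-order relation is given by its
arity n and a set of n-tuples; a second-order relation of type (i_1,...,i_k) is given
by the list [i_1,...,i_k] and a set of k-lists [R_1,...,R_k] with R_j a set of i_j-tuples.\<close>

datatype 'a rel =
    FO nat "'a list set"
  | SO "nat list" "'a list set list set"

definition typed_args :: "nat list \<Rightarrow> 'a list set list \<Rightarrow> bool" where
  "typed_args ts Rs \<longleftrightarrow> length Rs = length ts \<and>
     (\<forall>j < length ts. \<forall>t \<in> Rs ! j. length t = ts ! j)"

fun wf_rel :: "'a rel \<Rightarrow> bool" where
  "wf_rel (FO n R) \<longleftrightarrow> (\<forall>t \<in> R. length t = n)"
| "wf_rel (SO ts Q) \<longleftrightarrow> (\<forall>Rs \<in> Q. typed_args ts Rs)"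

definition act :: "('a \<Rightarrow> 'a) \<Rightarrow> 'a list set \<Rightarrow> 'a list set" where
  "act g R = map g ` R"

fun preserves :: "('a \<Rightarrow> 'a) \<Rightarrow> 'a rel \<Rightarrow> bool" where
  "preserves g (FO n R) \<longleftrightarrow> act g R = R"
| "preserves g (SO ts Q) \<longleftrightarrow>
     (\<forall>Rs. typed_args ts Rs \<longrightarrow> (Rs \<in> Q \<longleftrightarrow> map (act g) Rs \<in> Q))"

definition Aut :: "'a rel set \<Rightarrow> ('a \<Rightarrow> 'a) set" where
  "Aut \<Q> = {g. bij g \<and> (\<forall>q \<in> \<Q>. preserves g q)}"

definition Inv :: "('a \<Rightarrow> 'a) set \<Rightarrow> 'a rel set" where
  "Inv H = {q. wf_rel q \<and> (\<forall>h \<in> H. preserves h q)}"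

text \<open>Relation symbols and quantifier symbols are the relations of
Q themselves.  NewR j xs is the j-th new predicate symbol (used for
definability of second-order relations).  GQ q xss phis is the Lindstroem quantifier of q binding the
tuple xss!j in phis!j.\<close>

datatype ('v, 'i, 'a) fm =
    Eq 'v 'v
  | Atom "'a rel" "'v list"
  | NewR nat "'v list"
  | Neg "('v, 'i, 'a) fm"
  | Conj "'i set" "'i \<Rightarrow> ('v, 'i, 'a) fm"
  | Disj "'i set" "'i \<Rightarrow> ('v, 'i, 'a) fm"
  | Ex "'v set" "('v, 'i, 'a) fm"
  | All "'v set" "('v, 'i, 'a) fm"
  | GQ "'a rel" "'v list list" "('v, 'i, 'a) fm list"

primrec wf_fm :: "'a rel set \<Rightarrow> nat list \<Rightarrow> ('v, 'i, 'a) fm \<Rightarrow> bool" where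
  "wf_fm \<Q> ar (Eq x y) = True"
| "wf_fm \<Q> ar (Atom q xs) = (q \<in> \<Q> \<and> (\<exists>R. q = FO (length xs) R))"
| "wf_fm \<Q> ar (NewR j xs) = (j < length ar \<and> length xs = ar ! j)"
| "wf_fm \<Q> ar (Neg \<phi>) = wf_fm \<Q> ar \<phi>"
| "wf_fm \<Q> ar (Conj I f) = (\<forall>i \<in> I. wf_fm \<Q> ar (f i))"
| "wf_fm \<Q> ar (Disj I f) = (\<forall>i \<in> I. wf_fm \<Q> ar (f i))"
| "wf_fm \<Q> ar (Ex X \<phi>) = wf_fm \<Q> ar \<phi>"
| "wf_fm \<Q> ar (All X \<phi>) = wf_fm \<Q> ar \<phi>"
| "wf_fm \<Q> ar (GQ q xss \<phi>s) =
     (let bs = map (\<lambda>\<phi>. wf_fm \<Q> ar \<phi>) \<phi>s in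
      q \<in> \<Q> \<and> (\<exists>Q. q = SO (map length xss) Q) \<and> length bs = length xss \<and>
      (\<forall>xs \<in> set xss. distinct xs) \<and> (\<forall>b \<in> set bs. b))"

definition assign :: "('v \<Rightarrow> 'a) \<Rightarrow> 'v list \<Rightarrow> 'a list \<Rightarrow> 'v \<Rightarrow> 'a" where
  "assign v xs t = fold (\<lambda>(x, a) w. w(x := a)) (zip xs t) v"

primrec sat :: "'a list set list \<Rightarrow> ('v \<Rightarrow> 'a) \<Rightarrow> ('v, 'i, 'a) fm \<Rightarrow> bool" where
  "sat Rs v (Eq x y) = (v x = v y)"
| "sat Rs v (Atom q xs) = (case q of FO n R \<Rightarrow> map v xs \<in> R | SO ts Q \<Rightarrow> False)"
| "sat Rs v (NewR j xs) = (j < length Rs \<and> map v xs \<in> Rs ! j)"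
| "sat Rs v (Neg \<phi>) = (\<not> sat Rs v \<phi>)"
| "sat Rs v (Conj I f) = (\<forall>i \<in> I. sat Rs v (f i))"
| "sat Rs v (Disj I f) = (\<exists>i \<in> I. sat Rs v (f i))"
| "sat Rs v (Ex X \<phi>) = (\<exists>w. (\<forall>u. u \<notin> X \<longrightarrow> w u = v u) \<and> sat Rs w \<phi>)"
| "sat Rs v (All X \<phi>) = (\<forall>w. (\<forall>u. u \<notin> X \<longrightarrow> w u = v u) \<longrightarrow> sat Rs w \<phi>)"
| "sat Rs v (GQ q xss \<phi>s) =
     (case q of FO n R \<Rightarrow> False
      | SO ts Q \<Rightarrow>
          map (\<lambda>(xs, P). {t. length t = length xs \<and> P (assign v xs t)})
            (zip xss (map (\<lambda>\<phi> w. sat Rs w \<phi>) \<phi>s)) \<in> Q)"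

text \<open>A first-order relation R of arity n is defined by phi(x_1..x_n)
(distinct variables, no other free variables, no parameters); a second-order relation
of type ts is defined by a sentence of the language expanded by new predicate symbols
of arities ts.  "No further free variables / sentence" is expressed semantically: truth
depends only on the listed variables (resp. on no variable).\<close>

fun definable :: "'a rel set \<Rightarrow> 'a rel \<Rightarrow> ('v, 'i, 'a) fm \<Rightarrow> bool" where
  "definable \<Q> (FO n R) \<phi> \<longleftrightarrow> wf_fm \<Q> [] \<phi> \<and>
     (\<exists>xs. distinct xs \<and> length xs = n \<and> (\<forall>v. sat [] v \<phi> \<longleftrightarrow> map v xs \<in> R))"
| "definable \<Q> (SO ts Q) \<phi> \<longleftrightarrow> wf_fm \<Q> ts \<phi> \<and>
     (\<forall>Rs v. typed_args ts Rs \<longrightarrow> (sat Rs v \<phi> \<longleftrightarrow> Rs \<in> Q))"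

definition L_inf_definable ::
  "'v itself \<Rightarrow> 'i itself \<Rightarrow> 'a rel set \<Rightarrow> 'a rel \<Rightarrow> bool" where
  "L_inf_definable TYPE('v) TYPE('i) \<Q> q \<longleftrightarrow> (\<exists>\<phi> :: ('v, 'i, 'a) fm. definable \<Q> q \<phi>)"

abbreviation Sym :: "('a \<Rightarrow> 'a) monoid" where
  "Sym \<equiv> BijGroup (UNIV :: 'a set)"

end

theory Submission
  imports Defs
begin

lemma carrier_Sym: "carrier (Sym::('a\<Rightarrow>'a) monoid) = {f. bij f}"
  by (auto simp: BijGroup_def Bij_def)

lemma mult_Sym: "bij f \<Longrightarrow> bij g \<Longrightarrow> f \<otimes>\<^bsub>(Sym::('a\<Rightarrow>'a) monoid)\<^esub> g = f \<circ> g"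
  by (auto simp: BijGroup_def Bij_def compose_def)

lemma one_Sym: "\<one>\<^bsub>(Sym::('a\<Rightarrow>'a) monoid)\<^esub> = id"
  by (auto simp: BijGroup_def)

lemma inv_Sym: "bij f \<Longrightarrow> m_inv (Sym::('a\<Rightarrow>'a) monoid) f = inv_into UNIV f"
  by (subst inv_BijGroup) (auto simp: Bij_def)

lemma act_comp: "act (f \<circ> g) R = act f (act g R)"
  by (auto simp: act_def image_image)

lemma act_id[simp]: "act id R = R"
  by (simp add: act_def)

lemma act_inv: "bij g \<Longrightarrow> act (inv_into UNIV g) (act g R) = R"
  by (simp add: act_comp[symmetric] bij_is_inj)

lemma act_inv2: "bij g \<Longrightarrow> act g (act (inv_into UNIV g) R) = R"
proof -
  assume "bij g"
  hence "g \<circ> inv_into UNIV g = id" by (auto simp: fun_eq_iff bij_def surj_f_inv_f)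
  thus ?thesis by (metis act_comp act_id)
qed

lemma map_act_id[simp]: "map (act id) Rs = Rs"
  by (induct Rs) (auto simp: act_def)

lemma typed_args_act: "typed_args ts (map (act g) Rs) = typed_args ts Rs"
  by (auto simp: typed_args_def act_def)

lemma preserves_comp: "preserves g q \<Longrightarrow> preserves h q \<Longrightarrow> preserves (g \<circ> h) q"
proof (cases q)
  case (FO n R) assume "preserves g q" "preserves h q" thus ?thesis using FO by (simp add: act_comp)
next
  case (SO ts Q) assume a: "preserves g q" "preserves h q"
  have g: "\<forall>Rs. typed_args ts Rs \<longrightarrow> (Rs \<in> Q \<longleftrightarrow> map (act g) Rs \<in> Q)" using a(1) SO by simp
  have h: "\<forall>Rs. typed_args ts Rs \<longrightarrow> (Rs \<in> Q \<longleftrightarrow> map (act h) Rs \<in> Q)" using a(2) SO by simp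
  show ?thesis unfolding SO preserves.simps
  proof (intro allI impI)
    fix Rs :: "'a list set list" assume t: "typed_args ts Rs"
    have "map (act (g\<circ>h)) Rs = map (act g) (map (act h) Rs)" by (simp add: act_comp)
    moreover have "Rs \<in> Q \<longleftrightarrow> map (act h) Rs \<in> Q" using h t by blast
    moreover have "map (act h) Rs \<in> Q \<longleftrightarrow> map (act g) (map (act h) Rs) \<in> Q"
      using g t typed_args_act by metis
    ultimately show "(Rs \<in> Q) = (map (act (g \<circ> h)) Rs \<in> Q)" by metis
  qed
qed

lemma preserves_inv: "bij g \<Longrightarrow> preserves g q \<Longrightarrow> preserves (inv_into UNIV g) q"
proof (cases q)
  case (FO n R) assume "bij g" "preserves g q" thus ?thesis using FO
    by (metis act_inv preserves.simps(1))
next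
  case (SO ts Q) assume a: "bij g" "preserves g q"
  show ?thesis unfolding SO preserves.simps
  proof (intro allI impI)
    fix Rs :: "'a list set list" assume t: "typed_args ts Rs"
    have e: "map (act g) (map (act (inv_into UNIV g)) Rs) = Rs" using a(1) by (induct Rs) (simp_all add: act_inv2)
    show "(Rs \<in> Q) = (map (act (inv_into UNIV g)) Rs \<in> Q)" using a(2) t e unfolding SO
      by (metis preserves.simps(2) typed_args_act)
  qed
qed

lemma preserves_id: "preserves id q"
  by (cases q) auto

lemma Aut_subgroup: "subgroup (Aut X) (Sym::('a\<Rightarrow>'a) monoid)"
proof
  show "Aut X \<subseteq> carrier Sym" by (auto simp: Aut_def carrier_Sym)
  fix x y assume "x \<in> Aut X" "y \<in> Aut X"
  thus "x \<otimes>\<^bsub>Sym\<^esub> y \<in> Aut X"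
    by (auto simp: Aut_def mult_Sym preserves_comp bij_comp)
next
  show "\<one>\<^bsub>Sym\<^esub> \<in> Aut X" by (auto simp: Aut_def one_Sym preserves_id)
next
  fix x assume "x \<in> Aut X"
  thus "m_inv Sym x \<in> Aut X"
    by (auto simp: Aut_def inv_Sym preserves_inv bij_imp_bij_inv)
qed

definition Wl :: "('a\<times>'a) set \<Rightarrow> 'a list set" where
  "Wl r = {[x,y] | x y. (x,y) \<in> r}"

lemma rigid:
  assumes wo: "well_order_on UNIV r" and b: "bij f" and p: "act f (Wl r) = Wl r"
  shows "f = id"
proof (rule ccontr)
  assume ne: "f \<noteq> id"
  have inj: "inj f" using b bij_is_inj by auto
  have iff: "(x,y) \<in> r \<longleftrightarrow> (f x, f y) \<in> r" for x y
  proof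
    assume "(x,y) \<in> r"
    hence "[x,y] \<in> Wl r" by (auto simp: Wl_def)
    hence "map f [x,y] \<in> act f (Wl r)" unfolding act_def by (rule imageI)
    thus "(f x, f y) \<in> r" using p by (auto simp: Wl_def)
  next
    assume "(f x, f y) \<in> r"
    hence "[f x, f y] \<in> act f (Wl r)" using p by (auto simp: Wl_def)
    then obtain x' y' where "(x',y') \<in> r" "f x' = f x" "f y' = f y" by (auto simp: act_def Wl_def)
    thus "(x,y) \<in> r" using inj by (auto dest: injD)
  qed
  have wf: "wf (r - Id)" and tot: "total_on UNIV r"
    using wo by (auto simp: well_order_on_def linear_order_on_def)
  obtain x0 where x0: "f x0 \<noteq> x0" using ne by (auto simp: fun_eq_iff)
  have wm: "\<forall>Q x. x \<in> Q \<longrightarrow> (\<exists>z\<in>Q. \<forall>y. (y, z) \<in> r - Id \<longrightarrow> y \<notin> Q)"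
    using wf by (simp only: wf_eq_minimal)
  have "x0 \<in> {x. f x \<noteq> x}" using x0 by simp
  then obtain x where "x \<in> {x. f x \<noteq> x}" and mn0: "\<forall>y. (y, x) \<in> r - Id \<longrightarrow> y \<notin> {x. f x \<noteq> x}"
    using wm by meson
  hence x: "f x \<noteq> x" and mn: "\<And>y. (y,x) \<in> r - Id \<Longrightarrow> f y = y" by auto
  from tot x have "(f x, x) \<in> r \<or> (x, f x) \<in> r" by (auto simp: total_on_def)
  thus False
  proof
    assume "(f x, x) \<in> r"
    hence "f (f x) = f x" using mn x by auto
    thus False using inj x by (auto dest: injD)
  next
    assume a: "(x, f x) \<in> r"
    define y where "y = inv_into UNIV f x"
    have y: "f y = x" unfolding y_def using b by (simp add: bij_is_surj surj_f_inv_f)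
    have "(y, x) \<in> r" using iff[of y x] a y by simp
    moreover have "y \<noteq> x" using y x by auto
    ultimately have "f y = y" using mn by auto
    thus False using y x by auto
  qed
qed

definition QK :: "('a\<times>'a) set \<Rightarrow> ('a \<Rightarrow> 'a) set \<Rightarrow> 'a Defs.rel" where
  "QK r K = SO [2] {[act h (Wl r)] | h. h \<in> K}"

lemma wf_QK: "wf_rel (QK r K)"
  by (auto simp: QK_def typed_args_def act_def Wl_def)

lemma typed_single: "typed_args [2] Rs \<Longrightarrow> \<exists>S. Rs = [S]"
  by (cases Rs) (auto simp: typed_args_def)

lemma QK_pres:
  assumes K: "subgroup K (Sym::('a\<Rightarrow>'a) monoid)" and h0: "h0 \<in> K"
  shows "preserves h0 (QK r K)"
proof -
  have bK: "\<And>h. h \<in> K \<Longrightarrow> bij h" using subgroup.subset[OF K] by (auto simp: carrier_Sym)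
  have cK: "g \<circ> h \<in> K" if "g \<in> K" "h \<in> K" for g h
    using subgroup.m_closed[OF K that] unfolding mult_Sym[OF bK[OF that(1)] bK[OF that(2)]] .
  have iK: "inv_into UNIV h \<in> K" if "h \<in> K" for h
    using subgroup.m_inv_closed[OF K that] unfolding inv_Sym[OF bK[OF that]] .
  show ?thesis unfolding QK_def preserves.simps
  proof (intro allI impI)
    fix Rs :: "'a list set list" assume "typed_args [2] Rs"
    then obtain S where S: "Rs = [S]" using typed_single by blast
    show "(Rs \<in> {[act h (Wl r)] |h. h \<in> K}) = (map (act h0) Rs \<in> {[act h (Wl r)] |h. h \<in> K})"
    proof
      assume "Rs \<in> {[act h (Wl r)] |h. h \<in> K}"
      then obtain h where "h \<in> K" "S = act h (Wl r)" using S by auto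
      thus "map (act h0) Rs \<in> {[act h (Wl r)] |h. h \<in> K}" using S cK[OF h0] act_comp by fastforce
    next
      assume "map (act h0) Rs \<in> {[act h (Wl r)] |h. h \<in> K}"
      then obtain h where h: "h \<in> K" "act h0 S = act h (Wl r)" using S by auto
      hence "S = act (inv_into UNIV h0 \<circ> h) (Wl r)"
        using act_inv[OF bK[OF h0], of S] by (simp add: act_comp)
      thus "Rs \<in> {[act h (Wl r)] |h. h \<in> K}" using S cK[OF iK[OF h0] h(1)] by blast
    qed
  qed
qed

lemma part2:
  fixes H :: "('a \<Rightarrow> 'a) set"
  assumes H_perm: "H \<subseteq> carrier Sym"
  shows "Aut (Inv H) = \<Inter> {K. subgroup K Sym \<and> H \<subseteq> K}"
proof
  show "\<Inter> {K. subgroup K Sym \<and> H \<subseteq> K} \<subseteq> Aut (Inv H)"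
  proof -
    have "H \<subseteq> Aut (Inv H)" using H_perm by (auto simp: Aut_def Inv_def carrier_Sym)
    thus ?thesis using Aut_subgroup by blast
  qed
next
  show "Aut (Inv H) \<subseteq> \<Inter> {K. subgroup K Sym \<and> H \<subseteq> K}"
  proof (intro subsetI InterI)
    fix g K assume g: "g \<in> Aut (Inv H)" and "K \<in> {K. subgroup K Sym \<and> H \<subseteq> K}"
    hence K: "subgroup K Sym" and HK: "H \<subseteq> K" by auto
    obtain r :: "('a\<times>'a) set" where wo: "well_order_on UNIV r" using well_order_on by blast
    have bK: "\<And>h. h \<in> K \<Longrightarrow> bij h" using subgroup.subset[OF K] by (auto simp: carrier_Sym)
    have idK: "id \<in> K" using subgroup.one_closed[OF K] unfolding one_Sym .
    have "QK r K \<in> Inv H" using wf_QK QK_pres[OF K] HK by (auto simp: Inv_def)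
    hence pg: "preserves g (QK r K)" and bg: "bij g" using g by (auto simp: Aut_def)
    have ty: "typed_args [2] [Wl r]" by (auto simp: typed_args_def Wl_def)
    have "[Wl r] = [act id (Wl r)]" by simp
    hence "[Wl r] \<in> {[act h (Wl r)] |h. h \<in> K}" using idK by blast
    moreover have "\<forall>Rs. typed_args [2] Rs \<longrightarrow> (Rs \<in> {[act h (Wl r)] |h. h \<in> K} \<longleftrightarrow> map (act g) Rs \<in> {[act h (Wl r)] |h. h \<in> K})"
      using pg unfolding QK_def preserves.simps .
    ultimately have "map (act g) [Wl r] \<in> {[act h (Wl r)] |h. h \<in> K}" using ty by blast
    hence "[act g (Wl r)] \<in> {[act h (Wl r)] |h. h \<in> K}" by simp
    then obtain h where h: "h \<in> K" "act g (Wl r) = act h (Wl r)" by blast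
    have bh: "bij h" by (rule bK[OF h(1)])
    have "act (inv_into UNIV h \<circ> g) (Wl r) = act (inv_into UNIV h) (act g (Wl r))" by (rule act_comp)
    also have "\<dots> = act (inv_into UNIV h) (act h (Wl r))" unfolding h(2) ..
    also have "\<dots> = Wl r" by (rule act_inv[OF bh])
    finally have aa: "act (inv_into UNIV h \<circ> g) (Wl r) = Wl r" .
    have bi: "bij (inv_into UNIV h \<circ> g)" by (rule bij_comp[OF bg bij_imp_bij_inv[OF bh]])
    have e: "inv_into UNIV h \<circ> g = id" by (rule rigid[OF wo bi aa])
    have "g x = h x" for x
    proof -
      have "inv_into UNIV h (g x) = x" using e by (metis comp_apply id_apply)
      hence "h (inv_into UNIV h (g x)) = h x" by simp
      thus "g x = h x" using bh by (simp add: bij_is_surj surj_f_inv_f)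
    qed
    hence "g = h" by (rule ext)
    thus "g \<in> K" using h by simp
  qed
qed

lemma assign_Cons: "assign v (x#xs) (a#t) = assign (v(x:=a)) xs t"
  by (simp add: assign_def)

lemma assign_Nil1: "assign v [] t = v" by (simp add: assign_def)
lemma assign_Nil2: "assign v xs [] = v" by (simp add: assign_def)

lemma assign_comp: "assign (g \<circ> v) xs (map g t) = g \<circ> assign v xs t"
proof (induct xs arbitrary: t v)
  case Nil thus ?case by (simp add: assign_Nil1)
next
  case (Cons x xs) thus ?case
  proof (cases t)
    case Nil thus ?thesis by (simp add: assign_Nil2)
  next
    case (Cons a t')
    have e: "(g \<circ> v)(x := g a) = g \<circ> (v(x:=a))" by (auto simp: fun_eq_iff)
    have "assign (g \<circ> v) (x#xs) (map g t) = assign ((g \<circ> v)(x := g a)) xs (map g t')"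
      unfolding Cons list.map assign_Cons ..
    also have "\<dots> = g \<circ> assign (v(x:=a)) xs t'" unfolding e by (rule Cons.hyps)
    also have "\<dots> = g \<circ> assign v (x#xs) t" unfolding Cons assign_Cons ..
    finally show ?thesis .
  qed
qed

lemma assign_out: "y \<notin> set xs \<Longrightarrow> assign v xs t y = v y"
proof (induct xs arbitrary: t v)
  case Nil thus ?case by (simp add: assign_Nil1)
next
  case (Cons x xs) thus ?case by (cases t) (auto simp: assign_Nil2 assign_Cons)
qed

lemma assign_map: "distinct xs \<Longrightarrow> length t = length xs \<Longrightarrow> map (assign v xs t) xs = t"
proof (induct xs arbitrary: t v)
  case Nil thus ?case by simp
next
  case (Cons x xs) thus ?case
    by (cases t) (auto simp: assign_Cons assign_out)
qed

lemma map_in_act: "inj g \<Longrightarrow> map g s \<in> act g R \<longleftrightarrow> s \<in> R"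
proof -
  assume "inj g"
  hence "inj (map g)" by (simp add: inj_mapI)
  thus ?thesis by (simp add: act_def inj_image_mem_iff)
qed

lemma set_act_eq:
  assumes b: "bij g"
  shows "{t. length t = n \<and> P (g \<circ> f (map (inv_into UNIV g) t))} = act g {t. length t = n \<and> P (g \<circ> f t)}"
proof -
  have 1: "map g (map (inv_into UNIV g) t) = t" for t
    using b by (simp add: map_idI bij_is_surj surj_f_inv_f)
  have 2: "map (inv_into UNIV g) (map g s) = s" for s
    using b by (simp add: map_idI bij_is_inj)
  show ?thesis unfolding act_def
  proof (rule Set.set_eqI)
    fix x
    show "x \<in> {t. length t = n \<and> P (g \<circ> f (map (inv_into UNIV g) t))} \<longleftrightarrow> x \<in> map g ` {t. length t = n \<and> P (g \<circ> f t)}"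
      using 1 2 by (metis (no_types, lifting) image_iff length_map mem_Collect_eq)
  qed
qed

lemma sat_inv:
  fixes \<phi> :: "('v,'i,'a) fm"
  assumes "wf_fm \<Q> ar \<phi>" and gA: "g \<in> Aut \<Q>"
  shows "sat (map (act g) Rs) (g \<circ> v) \<phi> = sat Rs v \<phi>"
  using assms(1)
proof (induct \<phi> arbitrary: v)
  have b: "bij g" using gA by (simp add: Aut_def)
  have i: "inj g" using b bij_is_inj by auto
  have pr: "\<And>q. q \<in> \<Q> \<Longrightarrow> preserves g q" using gA by (simp add: Aut_def)
  {
  case (Eq x y) show ?case by (simp add: inj_eq[OF i])
  next
  case (Atom q xs)
  then obtain R where q: "q = FO (length xs) R" "q \<in> \<Q>" by auto
  have "preserves g q" using pr q(2) .
  hence aR: "act g R = R" unfolding q(1) preserves.simps .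
  have "sat (map (act g) Rs) (g \<circ> v) (Atom q xs) = (map g (map v xs) \<in> R)" unfolding q(1) by simp
  also have "\<dots> = (map g (map v xs) \<in> act g R)" unfolding aR ..
  also have "\<dots> = (map v xs \<in> R)" by (rule map_in_act[OF i])
  finally show ?case unfolding q(1) by (simp add: comp_def)
  next
  case (NewR j xs)
  have "sat (map (act g) Rs) (g \<circ> v) (NewR j xs) = (j < length Rs \<and> map g (map v xs) \<in> act g (Rs!j))" by auto
  also have "\<dots> = (j < length Rs \<and> map v xs \<in> Rs!j)" using map_in_act[OF i, of "map v xs"] by simp
  finally show ?case by (simp add: comp_def)
  next
  case (Neg \<phi>) thus ?case by simp
  next
  case (Conj I f) thus ?case by simp
  next
  case (Disj I f) thus ?case by simp
  next
  case (Ex X \<phi>)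
  have wfp: "wf_fm \<Q> ar \<phi>" using Ex.prems by simp
  note IH = Ex.hyps[OF wfp]
  have e: "g \<circ> (inv_into UNIV g \<circ> w) = w" for w using b
    by (auto simp: fun_eq_iff bij_is_surj surj_f_inv_f)
  show ?case
  proof
    assume "sat (map (act g) Rs) (g \<circ> v) (fm.Ex X \<phi>)"
    then obtain w where w: "\<forall>u. u \<notin> X \<longrightarrow> w u = (g\<circ>v) u" "sat (map (act g) Rs) w \<phi>" by auto
    let ?w = "inv_into UNIV g \<circ> w"
    have "\<forall>u. u \<notin> X \<longrightarrow> ?w u = v u" using w(1) i by auto
    moreover have "sat (map (act g) Rs) (g \<circ> ?w) \<phi>" unfolding e by (rule w(2))
    hence "sat Rs ?w \<phi>" by (rule iffD1[OF IH])
    ultimately show "sat Rs v (fm.Ex X \<phi>)" unfolding sat.simps by blast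
  next
    assume "sat Rs v (fm.Ex X \<phi>)"
    then obtain w where w: "\<forall>u. u \<notin> X \<longrightarrow> w u = v u" "sat Rs w \<phi>" by auto
    have "\<forall>u. u \<notin> X \<longrightarrow> (g \<circ> w) u = (g\<circ>v) u" using w(1) by auto
    moreover have "sat (map (act g) Rs) (g \<circ> w) \<phi>" by (rule iffD2[OF IH w(2)])
    ultimately show "sat (map (act g) Rs) (g \<circ> v) (fm.Ex X \<phi>)" unfolding sat.simps by blast
  qed
  next
  case (All X \<phi>)
  have wfp: "wf_fm \<Q> ar \<phi>" using All.prems by simp
  note IH = All.hyps[OF wfp]
  have e: "g \<circ> (inv_into UNIV g \<circ> w) = w" for w using b
    by (auto simp: fun_eq_iff bij_is_surj surj_f_inv_f)
  show ?case
  proof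
    assume a: "sat (map (act g) Rs) (g \<circ> v) (fm.All X \<phi>)"
    show "sat Rs v (fm.All X \<phi>)"
    proof (simp, intro allI impI)
      fix w assume w: "\<forall>u. u \<notin> X \<longrightarrow> w u = v u"
      have "\<forall>u. u \<notin> X \<longrightarrow> (g \<circ> w) u = (g\<circ>v) u" using w by auto
      hence "sat (map (act g) Rs) (g \<circ> w) \<phi>" using a by auto
      thus "sat Rs w \<phi>" by (rule iffD1[OF IH])
    qed
  next
    assume a: "sat Rs v (fm.All X \<phi>)"
    show "sat (map (act g) Rs) (g \<circ> v) (fm.All X \<phi>)"
    proof (simp, intro allI impI)
      fix w assume w: "\<forall>u. u \<notin> X \<longrightarrow> w u = g (v u)"
      let ?w = "inv_into UNIV g \<circ> w"
      have "\<forall>u. u \<notin> X \<longrightarrow> ?w u = v u" using w i by auto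
      hence "sat Rs ?w \<phi>" using a by auto
      hence "sat (map (act g) Rs) (g \<circ> ?w) \<phi>" by (rule iffD2[OF IH])
      thus "sat (map (act g) Rs) w \<phi>" unfolding e .
    qed
  qed
  next
  case (GQ q xss \<phi>s)
  from GQ.prems obtain Q where q: "q = SO (map length xss) Q" "q \<in> \<Q>"
    and len: "length \<phi>s = length xss" and wfs: "\<forall>\<phi>\<in>set \<phi>s. wf_fm \<Q> ar \<phi>"
    by (auto simp: Let_def)
  have pq: "preserves g q" by (rule pr[OF q(2)])
  let ?F = "\<lambda>Rs v. map (\<lambda>(xs, P). {t. length t = length xs \<and> P (assign v xs t)})
            (zip xss (map (\<lambda>\<phi> w. sat Rs w \<phi>) \<phi>s))"
  have eq: "?F (map (act g) Rs) (g \<circ> v) = map (act g) (?F Rs v)"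
  proof -
    have "?F (map (act g) Rs) (g \<circ> v) = map (\<lambda>(xs, \<phi>). {t. length t = length xs \<and> sat (map (act g) Rs) (assign (g\<circ>v) xs t) \<phi>}) (zip xss \<phi>s)"
      by (simp add: zip_map2 comp_def case_prod_beta)
    also have "\<dots> = map (\<lambda>(xs, \<phi>). act g {t. length t = length xs \<and> sat Rs (assign v xs t) \<phi>}) (zip xss \<phi>s)"
    proof (rule map_cong[OF refl], clarify)
      fix xs \<phi> assume m: "(xs, \<phi>) \<in> set (zip xss \<phi>s)"
      hence ph: "\<phi> \<in> set \<phi>s" by (rule set_zip_rightD)
      have IH: "\<And>w. sat (map (act g) Rs) (g \<circ> w) \<phi> = sat Rs w \<phi>" using GQ.hyps[OF ph] wfs ph by blast
      have c: "assign (g\<circ>v) xs t = g \<circ> assign v xs (map (inv_into UNIV g) t)" for t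
        using assign_comp[of g v xs "map (inv_into UNIV g) t"] b
        by (simp add: map_idI bij_is_surj surj_f_inv_f)
      have "{t. length t = length xs \<and> sat (map (act g) Rs) (assign (g\<circ>v) xs t) \<phi>}
          = {t. length t = length xs \<and> sat (map (act g) Rs) (g \<circ> (\<lambda>s. assign v xs s) (map (inv_into UNIV g) t)) \<phi>}"
        using c by simp
      also have "\<dots> = act g {t. length t = length xs \<and> sat (map (act g) Rs) (g \<circ> (\<lambda>s. assign v xs s) t) \<phi>}"
        by (rule set_act_eq[OF b])
      also have "\<dots> = act g {t. length t = length xs \<and> sat Rs (assign v xs t) \<phi>}"
        using IH by simp
      finally show "{t. length t = length xs \<and> sat (map (act g) Rs) (assign (g\<circ>v) xs t) \<phi>} = act g {t. length t = length xs \<and> sat Rs (assign v xs t) \<phi>}" .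
    qed
    also have "\<dots> = map (act g) (?F Rs v)"
      by (simp add: zip_map2 comp_def case_prod_beta)
    finally show ?thesis .
  qed
  have ty: "typed_args (map length xss) (?F Rs v)"
    using len by (auto simp: typed_args_def)
  have iff: "?F Rs v \<in> Q \<longleftrightarrow> map (act g) (?F Rs v) \<in> Q" using pq ty unfolding q(1) preserves.simps by blast
  have l: "sat (map (act g) Rs) (g \<circ> v) (GQ q xss \<phi>s) = (?F (map (act g) Rs) (g \<circ> v) \<in> Q)"
    unfolding q(1) sat.simps rel.case ..
  have r: "sat Rs v (GQ q xss \<phi>s) = (?F Rs v \<in> Q)" unfolding q(1) sat.simps rel.case ..
  show ?case unfolding l r eq using iff by blast
  }
qed

definition BConj :: "('x \<Rightarrow> 'i) \<Rightarrow> 'x set \<Rightarrow> ('x \<Rightarrow> ('v,'i,'a) fm) \<Rightarrow> ('v,'i,'a) fm" where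
  "BConj j A F = Conj (j ` A) (\<lambda>i. F (inv_into A j i))"
definition BDisj :: "('x \<Rightarrow> 'i) \<Rightarrow> 'x set \<Rightarrow> ('x \<Rightarrow> ('v,'i,'a) fm) \<Rightarrow> ('v,'i,'a) fm" where
  "BDisj j A F = Disj (j ` A) (\<lambda>i. F (inv_into A j i))"

lemma sat_BConj: "inj j \<Longrightarrow> sat Rs v (BConj j A F) = (\<forall>x\<in>A. sat Rs v (F x))"
  by (simp add: BConj_def inv_into_f_f inj_on_subset)
lemma sat_BDisj: "inj j \<Longrightarrow> sat Rs v (BDisj j A F) = (\<exists>x\<in>A. sat Rs v (F x))"
  by (simp add: BDisj_def inv_into_f_f inj_on_subset)
lemma wf_BConj: "inj j \<Longrightarrow> wf_fm Q ar (BConj j A F) = (\<forall>x\<in>A. wf_fm Q ar (F x))"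
  by (simp add: BConj_def inv_into_f_f inj_on_subset)
lemma wf_BDisj: "inj j \<Longrightarrow> wf_fm Q ar (BDisj j A F) = (\<forall>x\<in>A. wf_fm Q ar (F x))"
  by (simp add: BDisj_def inv_into_f_f inj_on_subset)

definition encL :: "'a list \<Rightarrow> 'a Defs.rel set" where "encL t = {FO 0 {t}}"
definition encN :: "nat \<Rightarrow> 'a Defs.rel set" where "encN n = {FO n {}}"
definition encRs :: "'a list set list \<Rightarrow> 'a Defs.rel set" where "encRs Rs = {SO [] {Rs}}"
definition encQ :: "'a Defs.rel \<Rightarrow> 'a Defs.rel set" where "encQ q = {q}"
definition encP :: "'a \<times> 'a \<Rightarrow> 'a Defs.rel set" where "encP p = {FO 0 {[fst p, snd p]}}"
definition encA :: "'a \<Rightarrow> 'a Defs.rel set" where "encA a = {FO 0 {[a]}}"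

lemma inj_encL: "inj encL" by (auto simp: inj_def encL_def)
lemma inj_encN: "inj (encN :: nat \<Rightarrow> 'a Defs.rel set)" by (auto simp: inj_def encN_def)
lemma inj_encRs: "inj encRs" by (auto simp: inj_def encRs_def)
lemma inj_encQ: "inj encQ" by (auto simp: inj_def encQ_def)
lemma inj_encP: "inj encP" by (auto simp: inj_def encP_def prod_eq_iff)
lemma inj_encA: "inj encA" by (auto simp: inj_def encA_def)

locale Lsetup =
  fixes \<iota> :: "'a Defs.rel set \<Rightarrow> 'i" and ve :: "'a \<Rightarrow> 'v" and vn :: "nat \<Rightarrow> 'v"
    and \<Q> :: "'a Defs.rel set"
  assumes inj_\<iota>: "inj \<iota>" and inj_ve: "inj ve" and inj_vn: "inj vn"
    and disj: "\<And>a n. ve a \<noteq> vn n"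
    and Q_wf: "\<forall>q \<in> \<Q>. wf_rel q"
begin

abbreviation "jL \<equiv> \<iota> \<circ> encL"
abbreviation "jN \<equiv> \<iota> \<circ> (encN :: nat \<Rightarrow> 'a Defs.rel set)"
abbreviation "jRs \<equiv> \<iota> \<circ> encRs"
abbreviation "jQ \<equiv> \<iota> \<circ> encQ"
abbreviation "jP \<equiv> \<iota> \<circ> encP"
abbreviation "jA \<equiv> \<iota> \<circ> encA"

lemma injs: "inj jL" "inj jN" "inj jRs" "inj jQ" "inj jP" "inj jA"
  using inj_\<iota> inj_encL inj_encN inj_encRs inj_encQ inj_encP inj_encA by (auto intro: inj_compose)

definition B :: "nat \<Rightarrow> 'v list" where "B n = map vn [0..<n]"

lemma B_distinct: "distinct (B n)" using inj_vn by (simp add: B_def distinct_map inj_on_def)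
lemma B_len[simp]: "length (B n) = n" by (simp add: B_def)
lemma ve_notin_B: "ve a \<notin> set (B n)" using disj by (auto simp: B_def)

definition eqT :: "'v list \<Rightarrow> 'a list \<Rightarrow> ('v,'i,'a) fm" where
  "eqT xs t = BConj jN {..<length t} (\<lambda>l. Eq (xs!l) (ve (t!l)))"

lemma sat_eqT: "length xs = length t \<Longrightarrow> sat Rs w (eqT xs t) = (map w xs = map (w \<circ> ve) t)"
  by (auto simp: eqT_def sat_BConj[OF injs(2)] list_eq_iff_nth_eq)

definition inSet :: "'v list \<Rightarrow> 'a list set \<Rightarrow> ('v,'i,'a) fm" where
  "inSet xs S = BDisj jL S (eqT xs)"

lemma sat_inSet: "\<forall>t\<in>S. length t = length xs \<Longrightarrow> sat Rs w (inSet xs S) = (map w xs \<in> act (w \<circ> ve) S)"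
  by (auto simp: inSet_def sat_BDisj[OF injs(1)] sat_eqT act_def)

lemma wf_eqT: "wf_fm Q ar (eqT xs t)" by (simp add: eqT_def wf_BConj[OF injs(2)])
lemma wf_inSet: "wf_fm Q ar (inSet xs S)" by (simp add: inSet_def wf_BDisj[OF injs(1)] wf_eqT)

definition and2 :: "('v,'i,'a) fm \<Rightarrow> ('v,'i,'a) fm \<Rightarrow> ('v,'i,'a) fm" where
  "and2 A C = BConj jN {0,1} (\<lambda>n. if n = 0 then A else C)"
definition or2 :: "('v,'i,'a) fm \<Rightarrow> ('v,'i,'a) fm \<Rightarrow> ('v,'i,'a) fm" where
  "or2 A C = BDisj jN {0,1} (\<lambda>n. if n = 0 then A else C)"
definition iff2 :: "('v,'i,'a) fm \<Rightarrow> ('v,'i,'a) fm \<Rightarrow> ('v,'i,'a) fm" where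
  "iff2 A C = and2 (or2 (Neg A) C) (or2 A (Neg C))"

lemma sat_and2[simp]: "sat Rs w (and2 A C) = (sat Rs w A \<and> sat Rs w C)"
  by (simp add: and2_def sat_BConj[OF injs(2)])
lemma sat_or2[simp]: "sat Rs w (or2 A C) = (sat Rs w A \<or> sat Rs w C)"
  by (simp add: or2_def sat_BDisj[OF injs(2)])
lemma sat_iff2[simp]: "sat Rs w (iff2 A C) = (sat Rs w A \<longleftrightarrow> sat Rs w C)"
  by (auto simp: iff2_def)
lemma wf_and2[simp]: "wf_fm Q ar (and2 A C) = (wf_fm Q ar A \<and> wf_fm Q ar C)"
  by (simp add: and2_def wf_BConj[OF injs(2)])
lemma wf_or2[simp]: "wf_fm Q ar (or2 A C) = (wf_fm Q ar A \<and> wf_fm Q ar C)"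
  by (simp add: or2_def wf_BDisj[OF injs(2)])
lemma wf_iff2[simp]: "wf_fm Q ar (iff2 A C) = (wf_fm Q ar A \<and> wf_fm Q ar C)"
  by (auto simp: iff2_def)

definition Dinj :: "('v,'i,'a) fm" where
  "Dinj = BConj jP {p. fst p \<noteq> snd p} (\<lambda>p. Neg (Eq (ve (fst p)) (ve (snd p))))"

lemma sat_Dinj: "sat Rs w Dinj = inj (w \<circ> ve)"
  by (auto simp: Dinj_def sat_BConj[OF injs(5)] inj_def)

definition Dsurj :: "('v,'i,'a) fm" where
  "Dsurj = All {vn 0} (BDisj jA UNIV (\<lambda>a. Eq (vn 0) (ve a)))"

lemma sat_Dsurj: "sat Rs w Dsurj = surj (w \<circ> ve)"
proof -
  have "sat Rs w Dsurj = (\<forall>w'. (\<forall>u. u \<noteq> vn 0 \<longrightarrow> w' u = w u) \<longrightarrow> (\<exists>a. w' (vn 0) = w' (ve a)))"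
    by (simp add: Dsurj_def sat_BDisj[OF injs(6)])
  also have "\<dots> = (\<forall>y. \<exists>a. y = w (ve a))"
  proof
    assume a: "\<forall>w'. (\<forall>u. u \<noteq> vn 0 \<longrightarrow> w' u = w u) \<longrightarrow> (\<exists>a. w' (vn 0) = w' (ve a))"
    show "\<forall>y. \<exists>a. y = w (ve a)"
    proof
      fix y
      from a[rule_format, of "w(vn 0 := y)"] obtain a where "y = (w(vn 0 := y)) (ve a)" by auto
      thus "\<exists>a. y = w (ve a)" using disj[of a 0] by auto
    qed
  next
    assume a: "\<forall>y. \<exists>a. y = w (ve a)"
    show "\<forall>w'. (\<forall>u. u \<noteq> vn 0 \<longrightarrow> w' u = w u) \<longrightarrow> (\<exists>a. w' (vn 0) = w' (ve a))"
      using a disj by metis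
  qed
  finally show ?thesis by (auto simp: surj_def)
qed

lemma wf_Dinj: "wf_fm Q ar Dinj" by (simp add: Dinj_def wf_BConj[OF injs(5)])
lemma wf_Dsurj: "wf_fm Q ar Dsurj" by (simp add: Dsurj_def wf_BDisj[OF injs(6)])

end

lemma fo_pres:
  assumes b: "bij h" and len: "\<forall>t\<in>R. length t = m"
  shows "(\<forall>t. length t = m \<longrightarrow> (t \<in> R \<longleftrightarrow> map h t \<in> R)) \<longleftrightarrow> act h R = R"
proof
  assume a: "\<forall>t. length t = m \<longrightarrow> (t \<in> R \<longleftrightarrow> map h t \<in> R)"
  show "act h R = R"
  proof (rule Set.set_eqI, rule iffI)
    fix s assume "s \<in> act h R"
    then obtain t where "t \<in> R" "s = map h t" by (auto simp: act_def)
    thus "s \<in> R" using a len by blast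
  next
    fix s assume s: "s \<in> R"
    let ?t = "map (inv_into UNIV h) s"
    have e: "map h ?t = s" using b by (simp add: map_idI bij_is_surj surj_f_inv_f)
    have lt: "length ?t = m" using len s by simp
    have "map h ?t \<in> R" using e s by simp
    hence "?t \<in> R" using a lt by blast
    hence "map h ?t \<in> act h R" unfolding act_def by (rule imageI)
    thus "s \<in> act h R" using e by simp
  qed
next
  assume a: "act h R = R"
  have i: "inj h" using b bij_is_inj by auto
  show "\<forall>t. length t = m \<longrightarrow> (t \<in> R \<longleftrightarrow> map h t \<in> R)"
  proof (intro allI impI)
    fix t
    have "map h t \<in> act h R \<longleftrightarrow> t \<in> R" by (rule map_in_act[OF i])
    thus "t \<in> R \<longleftrightarrow> map h t \<in> R" unfolding a by blast
  qed
qed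

context Lsetup begin

definition GQf :: "'a Defs.rel \<Rightarrow> nat list \<Rightarrow> 'a list set list \<Rightarrow> ('v,'i,'a) fm" where
  "GQf q ts Rs = GQ q (map B ts) (map2 (\<lambda>n S. inSet (B n) S) ts Rs)"

definition diagq :: "'a Defs.rel \<Rightarrow> ('v,'i,'a) fm" where
  "diagq q = (case q of
      FO m R \<Rightarrow> BConj jL {t. length t = m}
                 (\<lambda>t. if t \<in> R then Atom q (map ve t) else Neg (Atom q (map ve t)))
    | SO ts Q' \<Rightarrow> BConj jRs {Rs. typed_args ts Rs}
                 (\<lambda>Rs. if Rs \<in> Q' then GQf q ts Rs else Neg (GQf q ts Rs)))"

lemma GQ_eval:
  assumes ty: "typed_args ts Rs'"
  shows "map (\<lambda>(xs,P). {t. length t = length xs \<and> P (assign w xs t)})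
           (zip (map B ts) (map (\<lambda>\<phi> w. sat Rs w \<phi>) (map2 (\<lambda>n S. inSet (B n) S) ts Rs')))
         = map (act (w \<circ> ve)) Rs'"
proof -
  define L where "L = map (\<lambda>\<phi> w. sat Rs w \<phi>) (map2 (\<lambda>n S. inSet (B n) S) ts Rs')"
  define f where "f = (\<lambda>(xs,P). {t. length t = length xs \<and> P (assign w xs t)})"
  have l: "length Rs' = length ts" using ty by (simp add: typed_args_def)
  have lL: "length L = length ts" using l by (simp add: L_def)
  have "map f (zip (map B ts) L) = map (act (w \<circ> ve)) Rs'"
  proof (rule nth_equalityI)
    show "length (map f (zip (map B ts) L)) = length (map (act (w \<circ> ve)) Rs')" using l lL by simp
    fix j assume "j < length (map f (zip (map B ts) L))"
    hence j: "j < length ts" "j < length Rs'" using l lL by auto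
    have tl: "\<forall>t\<in>Rs'!j. length t = length (B (ts!j))" using ty j by (simp add: typed_args_def)
    have ve_eq: "assign w (B (ts!j)) t \<circ> ve = w \<circ> ve" for t
      by (auto simp: fun_eq_iff assign_out ve_notin_B)
    have Lj: "L!j = (\<lambda>w. sat Rs w (inSet (B (ts!j)) (Rs'!j)))" using j by (simp add: L_def)
    have zj: "zip (map B ts) L ! j = (B (ts!j), L!j)" using j lL by simp
    have "map f (zip (map B ts) L) ! j = f (B (ts!j), L!j)" using j lL zj by simp
    also have "\<dots> = {t. length t = ts!j \<and> sat Rs (assign w (B (ts!j)) t) (inSet (B (ts!j)) (Rs'!j))}"
      unfolding f_def Lj by simp
    also have "\<dots> = {t. length t = ts!j \<and> t \<in> act (w \<circ> ve) (Rs'!j)}"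
    proof (rule Set.set_eqI)
      fix t :: "'a list"
      show "t \<in> {t. length t = ts!j \<and> sat Rs (assign w (B (ts!j)) t) (inSet (B (ts!j)) (Rs'!j))}
         \<longleftrightarrow> t \<in> {t. length t = ts!j \<and> t \<in> act (w \<circ> ve) (Rs'!j)}"
      proof (cases "length t = ts!j")
        case True
        have "sat Rs (assign w (B (ts!j)) t) (inSet (B (ts!j)) (Rs'!j))
             = (map (assign w (B (ts!j)) t) (B (ts!j)) \<in> act (assign w (B (ts!j)) t \<circ> ve) (Rs'!j))"
          by (rule sat_inSet[OF tl])
        also have "\<dots> = (t \<in> act (w \<circ> ve) (Rs'!j))"
          unfolding ve_eq using True B_distinct by (simp add: assign_map)
        finally show ?thesis using True by simp
      qed simp
    qed
    also have "\<dots> = act (w \<circ> ve) (Rs'!j)" using tl by (auto simp: act_def)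
    also have "\<dots> = map (act (w \<circ> ve)) Rs' ! j" using j by simp
    finally show "map f (zip (map B ts) L) ! j = map (act (w \<circ> ve)) Rs' ! j" .
  qed
  thus ?thesis unfolding f_def L_def .
qed

lemma sat_GQf:
  assumes ty: "typed_args ts Rs'"
  shows "sat Rs w (GQf (SO ts Q') ts Rs') = (map (act (w \<circ> ve)) Rs' \<in> Q')"
proof -
  have "sat Rs w (GQf (SO ts Q') ts Rs') = (map (\<lambda>(xs,P). {t. length t = length xs \<and> P (assign w xs t)})
           (zip (map B ts) (map (\<lambda>\<phi> w. sat Rs w \<phi>) (map2 (\<lambda>n S. inSet (B n) S) ts Rs'))) \<in> Q')"
    unfolding GQf_def sat.simps rel.case ..
  also have "\<dots> = (map (act (w \<circ> ve)) Rs' \<in> Q')" unfolding GQ_eval[OF ty] ..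
  finally show ?thesis .
qed

lemma sat_diagq:
  assumes b: "bij (w \<circ> ve)" and wq: "wf_rel q"
  shows "sat Rs w (diagq q) = preserves (w \<circ> ve) q"
proof (cases q)
  case (FO m R)
  have len: "\<forall>t\<in>R. length t = m" using wq FO by simp
  have "sat Rs w (diagq q) = (\<forall>t. length t = m \<longrightarrow> (t \<in> R \<longleftrightarrow> map (w \<circ> ve) t \<in> R))"
    unfolding FO diagq_def rel.case sat_BConj[OF injs(1)] by auto
  also have "\<dots> = preserves (w \<circ> ve) q" using fo_pres[OF b len] FO by simp
  finally show ?thesis .
next
  case (SO ts Q')
  have "sat Rs w (diagq q) = (\<forall>Rs'. typed_args ts Rs' \<longrightarrow> (Rs' \<in> Q' \<longleftrightarrow> map (act (w \<circ> ve)) Rs' \<in> Q'))"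
    unfolding SO diagq_def rel.case sat_BConj[OF injs(3)] using sat_GQf by auto
  also have "\<dots> = preserves (w \<circ> ve) q" using SO by simp
  finally show ?thesis .
qed

lemma wf_diagq: "q \<in> \<Q> \<Longrightarrow> wf_fm \<Q> ar (diagq q)"
proof (cases q)
  case (FO m R) assume "q \<in> \<Q>"
  thus ?thesis unfolding FO diagq_def rel.case wf_BConj[OF injs(1)] using FO by auto
next
  case (SO ts Q') assume q: "q \<in> \<Q>"
  have ml: "map length (map B ts) = ts" by (induct ts) auto
  have "wf_fm \<Q> ar (GQf q ts Rs)" if "typed_args ts Rs" for Rs
  proof -
    have "length Rs = length ts" using that by (simp add: typed_args_def)
    thus ?thesis using q SO ml B_distinct
      by (auto simp: GQf_def Let_def wf_inSet set_zip)
  qed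
  thus ?thesis unfolding SO diagq_def rel.case wf_BConj[OF injs(3)] by (auto simp: SO)
qed

definition Diag :: "('v,'i,'a) fm" where
  "Diag = and2 Dinj (and2 Dsurj (BConj jQ \<Q> diagq))"

lemma sat_Diag: "sat Rs w Diag = (w \<circ> ve \<in> Aut \<Q>)"
proof
  assume a: "sat Rs w Diag"
  hence b: "bij (w \<circ> ve)" by (simp add: Diag_def sat_Dinj sat_Dsurj bij_def)
  have "\<forall>q\<in>\<Q>. sat Rs w (diagq q)" using a by (simp add: Diag_def sat_BConj[OF injs(4)])
  thus "w \<circ> ve \<in> Aut \<Q>" using sat_diagq[OF b] Q_wf b by (auto simp: Aut_def)
next
  assume a: "w \<circ> ve \<in> Aut \<Q>"
  hence b: "bij (w \<circ> ve)" by (simp add: Aut_def)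
  have "\<forall>q\<in>\<Q>. sat Rs w (diagq q)" using a sat_diagq[OF b] Q_wf by (auto simp: Aut_def)
  thus "sat Rs w Diag" using b
    by (simp add: Diag_def sat_Dinj sat_Dsurj sat_BConj[OF injs(4)] bij_def)
qed

lemma wf_Diag: "wf_fm \<Q> ar Diag"
  by (simp add: Diag_def wf_Dinj wf_Dsurj wf_BConj[OF injs(4)] wf_diagq)

end

context Lsetup begin

definition w0 :: "('v \<Rightarrow> 'a) \<Rightarrow> 'v \<Rightarrow> 'a" where
  "w0 v = (\<lambda>u. if u \<in> range ve then inv_into UNIV ve u else v u)"

lemma w0_ve: "w0 v \<circ> ve = id"
  using inj_ve by (auto simp: w0_def fun_eq_iff)

lemma w0_agree: "\<forall>u. u \<notin> range ve \<longrightarrow> w0 v u = v u"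
  by (simp add: w0_def)

lemma id_Aut: "id \<in> Aut \<Q>"
  by (simp add: Aut_def preserves_id)

lemma map_B_agree: "\<forall>u. u \<notin> range ve \<longrightarrow> w u = v u \<Longrightarrow> map w (B n) = map v (B n)"
  using ve_notin_B by (auto simp: B_def) (metis disj rangeE)

definition phiFO :: "nat \<Rightarrow> 'a list set \<Rightarrow> ('v,'i,'a) fm" where
  "phiFO n R = fm.Ex (range ve) (and2 Diag (inSet (B n) R))"

lemma definable_FO:
  assumes wq: "wf_rel (FO n R)" and inv: "FO n R \<in> Inv (Aut \<Q>)"
  shows "definable \<Q> (FO n R) (phiFO n R)"
proof -
  have len: "\<forall>t\<in>R. length t = length (B n)" using wq by simp
  have s: "sat [] v (phiFO n R) \<longleftrightarrow> map v (B n) \<in> R" for v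
  proof
    assume "sat [] v (phiFO n R)"
    then obtain w where w: "\<forall>u. u \<notin> range ve \<longrightarrow> w u = v u" "w \<circ> ve \<in> Aut \<Q>"
       "map w (B n) \<in> act (w \<circ> ve) R"
      by (auto simp: phiFO_def sat_Diag sat_inSet[OF len])
    have "preserves (w \<circ> ve) (FO n R)" using inv w(2) by (auto simp: Inv_def)
    hence "act (w \<circ> ve) R = R" by simp
    thus "map v (B n) \<in> R" using w(3) map_B_agree[OF w(1)] by simp
  next
    assume a: "map v (B n) \<in> R"
    have "sat [] (w0 v) (and2 Diag (inSet (B n) R))"
    proof -
      have m: "map (w0 v) (B n) \<in> R" unfolding map_B_agree[OF w0_agree, of v n] by (rule a)
      show ?thesis using m by (simp add: sat_Diag sat_inSet[OF len] w0_ve id_Aut)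
    qed
    thus "sat [] v (phiFO n R)" using w0_agree unfolding phiFO_def sat.simps by blast
  qed
  have w: "wf_fm \<Q> [] (phiFO n R)" by (simp add: phiFO_def wf_Diag wf_inSet)
  have "\<exists>xs. distinct xs \<and> length xs = n \<and> (\<forall>v. sat [] v (phiFO n R) \<longleftrightarrow> map v xs \<in> R)"
    using s B_distinct[of n] by (intro exI[of _ "B n"]) simp
  thus ?thesis using w by simp
qed

definition phiSO :: "nat list \<Rightarrow> 'a list set list set \<Rightarrow> ('v,'i,'a) fm" where
  "phiSO ts Q' = fm.Ex (range ve) (and2 Diag (BDisj jRs Q' (\<lambda>Ss. BConj jN {..<length ts}
      (\<lambda>j. fm.All (set (B (ts!j))) (iff2 (NewR j (B (ts!j))) (inSet (B (ts!j)) (Ss!j)))))))"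

lemma match_lemma:
  assumes ty: "typed_args ts Rs" and tyS: "typed_args ts Ss" and j: "j < length ts"
  shows "(\<forall>w'. (\<forall>u. u \<notin> set (B (ts!j)) \<longrightarrow> w' u = w u) \<longrightarrow>
            (sat Rs w' (NewR j (B (ts!j)) :: ('v,'i,'a) fm) \<longleftrightarrow> sat Rs w' (inSet (B (ts!j)) (Ss!j))))
         \<longleftrightarrow> Rs!j = act (w \<circ> ve) (Ss!j)"
proof -
  have lR: "length Rs = length ts" and tR: "\<forall>t\<in>Rs!j. length t = ts!j"
    using ty j by (auto simp: typed_args_def)
  have tS: "\<forall>t\<in>Ss!j. length t = length (B (ts!j))" using tyS j by (auto simp: typed_args_def)
  have ve_eq: "(\<forall>u. u \<notin> set (B (ts!j)) \<longrightarrow> w' u = w u) \<Longrightarrow> w' \<circ> ve = w \<circ> ve" for w'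
    using ve_notin_B by (auto simp: fun_eq_iff)
  have "(\<forall>w'. (\<forall>u. u \<notin> set (B (ts!j)) \<longrightarrow> w' u = w u) \<longrightarrow>
            (sat Rs w' (NewR j (B (ts!j)) :: ('v,'i,'a) fm) \<longleftrightarrow> sat Rs w' (inSet (B (ts!j)) (Ss!j))))
      \<longleftrightarrow> (\<forall>w'. (\<forall>u. u \<notin> set (B (ts!j)) \<longrightarrow> w' u = w u) \<longrightarrow>
            (map w' (B (ts!j)) \<in> Rs!j \<longleftrightarrow> map w' (B (ts!j)) \<in> act (w \<circ> ve) (Ss!j)))"
  proof -
    have step: "(sat Rs w' (NewR j (B (ts!j)) :: ('v,'i,'a) fm) \<longleftrightarrow> sat Rs w' (inSet (B (ts!j)) (Ss!j)))
       \<longleftrightarrow> (map w' (B (ts!j)) \<in> Rs!j \<longleftrightarrow> map w' (B (ts!j)) \<in> act (w \<circ> ve) (Ss!j))"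
      if ag: "\<forall>u. u \<notin> set (B (ts!j)) \<longrightarrow> w' u = w u" for w'
    proof -
      have e: "w' \<circ> ve = w \<circ> ve" by (rule ve_eq[OF ag])
      have "sat Rs w' (inSet (B (ts!j)) (Ss!j)) = (map w' (B (ts!j)) \<in> act (w' \<circ> ve) (Ss!j))"
        by (rule sat_inSet[OF tS])
      thus ?thesis unfolding e using lR j by simp
    qed
    show ?thesis using step by blast
  qed
  also have "\<dots> \<longleftrightarrow> (\<forall>t. length t = ts!j \<longrightarrow> (t \<in> Rs!j \<longleftrightarrow> t \<in> act (w \<circ> ve) (Ss!j)))"
  proof
    assume a: "\<forall>w'. (\<forall>u. u \<notin> set (B (ts!j)) \<longrightarrow> w' u = w u) \<longrightarrow>
            (map w' (B (ts!j)) \<in> Rs!j \<longleftrightarrow> map w' (B (ts!j)) \<in> act (w \<circ> ve) (Ss!j))"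
    show "\<forall>t. length t = ts!j \<longrightarrow> (t \<in> Rs!j \<longleftrightarrow> t \<in> act (w \<circ> ve) (Ss!j))"
    proof (intro allI impI)
      fix t :: "'a list" assume lt: "length t = ts!j"
      have "map (assign w (B (ts!j)) t) (B (ts!j)) = t" using lt B_distinct by (simp add: assign_map)
      moreover have "\<forall>u. u \<notin> set (B (ts!j)) \<longrightarrow> assign w (B (ts!j)) t u = w u" by (simp add: assign_out)
      ultimately show "t \<in> Rs!j \<longleftrightarrow> t \<in> act (w \<circ> ve) (Ss!j)" using a by metis
    qed
  next
    assume "\<forall>t. length t = ts!j \<longrightarrow> (t \<in> Rs!j \<longleftrightarrow> t \<in> act (w \<circ> ve) (Ss!j))"
    thus "\<forall>w'. (\<forall>u. u \<notin> set (B (ts!j)) \<longrightarrow> w' u = w u) \<longrightarrow>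
            (map w' (B (ts!j)) \<in> Rs!j \<longleftrightarrow> map w' (B (ts!j)) \<in> act (w \<circ> ve) (Ss!j))" by simp
  qed
  also have "\<dots> \<longleftrightarrow> Rs!j = act (w \<circ> ve) (Ss!j)"
  proof -
    have "\<forall>t\<in>act (w \<circ> ve) (Ss!j). length t = ts!j" using tS by (auto simp: act_def)
    thus ?thesis using tR by blast
  qed
  finally show ?thesis .
qed

lemma definable_SO:
  assumes wq: "wf_rel (SO ts Q')" and inv: "SO ts Q' \<in> Inv (Aut \<Q>)"
  shows "definable \<Q> (SO ts Q') (phiSO ts Q')"
proof -
  have tyQ: "\<And>Ss. Ss \<in> Q' \<Longrightarrow> typed_args ts Ss" using wq by simp
  have "sat Rs v (phiSO ts Q') \<longleftrightarrow> Rs \<in> Q'" if ty: "typed_args ts Rs" for Rs v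
  proof -
    have lR: "length Rs = length ts" using ty by (simp add: typed_args_def)
    have inner: "sat Rs w (BConj jN {..<length ts}
      (\<lambda>j. fm.All (set (B (ts!j))) (iff2 (NewR j (B (ts!j))) (inSet (B (ts!j)) (Ss!j)))))
      \<longleftrightarrow> Rs = map (act (w \<circ> ve)) Ss" if S: "Ss \<in> Q'" for w Ss
    proof -
      have lS: "length Ss = length ts" using tyQ[OF S] by (simp add: typed_args_def)
      have "sat Rs w (BConj jN {..<length ts}
        (\<lambda>j. fm.All (set (B (ts!j))) (iff2 (NewR j (B (ts!j))) (inSet (B (ts!j)) (Ss!j)))))
        \<longleftrightarrow> (\<forall>j<length ts. Rs!j = act (w \<circ> ve) (Ss!j))"
      proof -
        have "\<And>j. sat Rs w (fm.All (set (B (ts!j))) (iff2 (NewR j (B (ts!j))) (inSet (B (ts!j)) (Ss!j))))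
          = (\<forall>w'. (\<forall>u. u \<notin> set (B (ts!j)) \<longrightarrow> w' u = w u) \<longrightarrow>
            (sat Rs w' (NewR j (B (ts!j)) :: ('v,'i,'a) fm) \<longleftrightarrow> sat Rs w' (inSet (B (ts!j)) (Ss!j))))"
          by (simp only: sat.simps(8) sat_iff2)
        thus ?thesis unfolding sat_BConj[OF injs(2)] using match_lemma[OF ty tyQ[OF S]] by auto
      qed
      also have "\<dots> \<longleftrightarrow> Rs = map (act (w \<circ> ve)) Ss"
        using lR lS by (auto simp: list_eq_iff_nth_eq)
      finally show ?thesis .
    qed
    show ?thesis
    proof
      assume "sat Rs v (phiSO ts Q')"
      then obtain w Ss where w: "w \<circ> ve \<in> Aut \<Q>" "Ss \<in> Q'" "Rs = map (act (w \<circ> ve)) Ss"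
        unfolding phiSO_def sat.simps sat_and2 sat_Diag sat_BDisj[OF injs(3)] using inner by blast
      have "preserves (w \<circ> ve) (SO ts Q')" using inv w(1) by (auto simp: Inv_def)
      hence p: "\<forall>Rs. typed_args ts Rs \<longrightarrow> (Rs \<in> Q' \<longleftrightarrow> map (act (w \<circ> ve)) Rs \<in> Q')" by simp
      hence "map (act (w \<circ> ve)) Ss \<in> Q'" using w(2) tyQ[OF w(2)] by blast
      thus "Rs \<in> Q'" using w(3) by simp
    next
      assume a: "Rs \<in> Q'"
      have "sat Rs (w0 v) (and2 Diag (BDisj jRs Q' (\<lambda>Ss. BConj jN {..<length ts}
      (\<lambda>j. fm.All (set (B (ts!j))) (iff2 (NewR j (B (ts!j))) (inSet (B (ts!j)) (Ss!j)))))))"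
        unfolding sat_and2 sat_Diag sat_BDisj[OF injs(3)] using inner[OF a, of "w0 v"] a
        by (auto simp: w0_ve id_Aut)
      thus "sat Rs v (phiSO ts Q')" using w0_agree unfolding phiSO_def sat.simps by blast
    qed
  qed
  moreover have "wf_fm \<Q> ts (phiSO ts Q')"
    by (simp add: phiSO_def wf_Diag wf_inSet wf_BDisj[OF injs(3)] wf_BConj[OF injs(2)])
  ultimately show ?thesis by auto
qed

end

lemma easy_dir:
  fixes \<phi> :: "('v,'i,'a) fm"
  assumes wq: "wf_rel q" and d: "definable \<Q> q \<phi>"
  shows "q \<in> Inv (Aut \<Q>)"
proof -
  have "preserves g q" if gA: "g \<in> Aut \<Q>" for g
  proof (cases q)
    case (FO n R)
    from d FO obtain xs where wfp: "wf_fm \<Q> [] \<phi>" and xs: "distinct xs" "length xs = n"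
      and dv: "\<And>v. sat [] v \<phi> \<longleftrightarrow> map v xs \<in> R" by auto
    have b: "bij g" using gA by (simp add: Aut_def)
    have len: "\<forall>t\<in>R. length t = n" using wq FO by simp
    have "\<forall>t. length t = n \<longrightarrow> (t \<in> R \<longleftrightarrow> map g t \<in> R)"
    proof (intro allI impI)
      fix t :: "'a list" assume lt: "length t = n"
      define v :: "'v \<Rightarrow> 'a" where "v = assign (\<lambda>_. undefined) xs t"
      have mv: "map v xs = t" using xs lt by (simp add: v_def assign_map)
      have "sat (map (act g) []) (g \<circ> v) \<phi> = sat [] v \<phi>" by (rule sat_inv[OF wfp gA])
      hence "map (g \<circ> v) xs \<in> R \<longleftrightarrow> map v xs \<in> R" using dv by simp
      thus "t \<in> R \<longleftrightarrow> map g t \<in> R" using mv by auto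
    qed
    hence "act g R = R" using fo_pres[OF b len] by blast
    thus ?thesis using FO by simp
  next
    case (SO ts Q')
    from d SO have wfp: "wf_fm \<Q> ts \<phi>"
      and dv: "\<And>Rs v. typed_args ts Rs \<Longrightarrow> sat Rs v \<phi> \<longleftrightarrow> Rs \<in> Q'" by auto
    show ?thesis unfolding SO preserves.simps
    proof (intro allI impI)
      fix Rs :: "'a list set list" assume ty: "typed_args ts Rs"
      fix v :: "'v \<Rightarrow> 'a"
      have "sat (map (act g) Rs) (g \<circ> v) \<phi> = sat Rs v \<phi>" by (rule sat_inv[OF wfp gA])
      moreover have "sat (map (act g) Rs) (g \<circ> v) \<phi> \<longleftrightarrow> map (act g) Rs \<in> Q'"
        using dv ty typed_args_act by metis
      ultimately show "Rs \<in> Q' \<longleftrightarrow> map (act g) Rs \<in> Q'" using dv[OF ty] by blast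
    qed
  qed
  thus ?thesis using wq by (simp add: Inv_def)
qed

theorem theorem2:
  fixes \<Q> :: "'a rel set" and H :: "('a \<Rightarrow> 'a) set"
  assumes Q_wf: "\<forall>q \<in> \<Q>. wf_rel q"
    and H_perm: "H \<subseteq> carrier Sym"
    and vars_large: "\<exists>f :: 'a rel set \<Rightarrow> 'v. inj f"
    and index_large: "\<exists>f :: 'a rel set \<Rightarrow> 'i. inj f"
  shows "(\<forall>q. wf_rel q \<longrightarrow>
            (q \<in> Inv (Aut \<Q>) \<longleftrightarrow> L_inf_definable TYPE('v) TYPE('i) \<Q> q))
         \<and> Aut (Inv H) = \<Inter> {K. subgroup K Sym \<and> H \<subseteq> K}"
proof
  obtain fv :: "'a rel set \<Rightarrow> 'v" where fv: "inj fv" using vars_large by blast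
  obtain fi :: "'a rel set \<Rightarrow> 'i" where fi: "inj fi" using index_large by blast
  define ve where "ve = (\<lambda>a. fv {FO 1 {[a]}})"
  define vn where "vn = (\<lambda>n. fv {FO (Suc (Suc n)) {}})"
  have "Lsetup fi ve vn \<Q>"
  proof
    show "inj fi" by (rule fi)
    show "inj ve" unfolding ve_def inj_def using fv by (auto dest: injD)
    show "inj vn" unfolding vn_def inj_def using fv by (auto dest: injD)
    show "ve a \<noteq> vn n" for a n unfolding ve_def vn_def using fv by (auto dest: injD)
    show "\<forall>q \<in> \<Q>. wf_rel q" by (rule Q_wf)
  qed
  then interpret L: Lsetup fi ve vn \<Q> .
  show "\<forall>q. wf_rel q \<longrightarrow> (q \<in> Inv (Aut \<Q>) \<longleftrightarrow> L_inf_definable TYPE('v) TYPE('i) \<Q> q)"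
  proof (intro allI impI iffI)
    fix q :: "'a rel" assume wq: "wf_rel q"
    {
      assume inv: "q \<in> Inv (Aut \<Q>)"
      show "L_inf_definable TYPE('v) TYPE('i) \<Q> q"
      proof (cases q)
        case (FO n R)
        have "definable \<Q> q (L.phiFO n R)" using L.definable_FO wq inv FO by simp
        thus ?thesis unfolding L_inf_definable_def by blast
      next
        case (SO ts Q')
        have "definable \<Q> q (L.phiSO ts Q')" using L.definable_SO wq inv SO by simp
        thus ?thesis unfolding L_inf_definable_def by blast
      qed
    }
    {
      assume "L_inf_definable TYPE('v) TYPE('i) \<Q> q"
      then obtain \<phi> :: "('v,'i,'a) fm" where "definable \<Q> q \<phi>" unfolding L_inf_definable_def by blast
      thus "q \<in> Inv (Aut \<Q>)" using easy_dir wq by blast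
    }
  qed
next
  show "Aut (Inv H) = \<Inter> {K. subgroup K Sym \<and> H \<subseteq> K}" by (rule part2[OF H_perm])
qed

end
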